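(* Let $X$ satisfy (P1) and (P2), let $\alpha$ be a saddle connection on $X$ which is neither a side nor a diagonal, and let $\alpha_{a+1},\dots,\alpha_{a+r}$ be a maximal run of consecutive adjacent segments in its polygonal decomposition which is not contained in a short cylinder. Then for any three consecutive segments $\alpha_i,\alpha_{i+1},\alpha_{i+2}$ of the run, no two of them lie in the same polygon.
   Context: $X$ is a translation surface obtained from finitely many Euclidean polygons by gluing pairs of parallel sides of equal length by translations, with (P1): each polygon convex with all angles obtuse or right; (P2): no two sides of the same polygon are identified. Saddle connection: straight segment between singularities (images of vertices) with none in its interior; a diagonal is a segment inside a polygon joining two non-adjacent vertices. Polygonal decomposition: cut $\alpha$ each time it passes from one polygon to another, giving consecutive oriented segments $\alpha_1,\dots,\alpha_k$, each in one polygon. A segment in polygon $P$ is adjacent if it goes from the relative interior of a side $e$ of $P$ to the relative interior of a side adjacent to $e$; otherwise non-adjacent. The type of a segment going from the interior of side $e$ to the interior of side $e'$ of the same polygon is $e\to e'$. A maximal run of consecutive adjacent segments is contained in a short cylinder if it has at least two segments and, whenever $\alpha_i$ and $\alpha_{i+2}$ both belong to the run, $\alpha_{i+2}$ has the same type as $\alpha_i$. *)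

theory Defs
  imports "HOL-Analysis.Analysis"
begin

text \<open>
The polygon data of X is a list P of polygons;
polygon p (for p < length P) is the list of its vertices, in counterclockwise order.
Side (p,i) (i < number of vertices of p) is the segment from vertex i to vertex i+1 (mod n).
The gluing is a map sg on sides (pairs (polygon index, side index)).
\<close>

definition nverts :: "complex list list \<Rightarrow> nat \<Rightarrow> nat" where
  "nverts P p = length (P ! p)"

definition vtx :: "complex list list \<Rightarrow> nat \<Rightarrow> nat \<Rightarrow> complex" where
  "vtx P p i = (P ! p) ! (i mod nverts P p)"

definition edge_vec :: "complex list list \<Rightarrow> nat \<Rightarrow> nat \<Rightarrow> complex" where
  "edge_vec P p i = vtx P p (Suc i) - vtx P p i"

definition cross :: "complex \<Rightarrow> complex \<Rightarrow> real" where
  "cross a b = Im (cnj a * b)"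

definition dotc :: "complex \<Rightarrow> complex \<Rightarrow> real" where
  "dotc a b = Re (cnj a * b)"

definition is_side :: "complex list list \<Rightarrow> nat \<times> nat \<Rightarrow> bool" where
  "is_side P s \<longleftrightarrow> fst s < length P \<and> snd s < nverts P (fst s)"

definition poly_region :: "complex list list \<Rightarrow> nat \<Rightarrow> complex set" where
  "poly_region P p = convex hull (set (P ! p))"

definition side_interior :: "complex list list \<Rightarrow> nat \<Rightarrow> nat \<Rightarrow> complex set" where
  "side_interior P p i = open_segment (vtx P p i) (vtx P p (Suc i))"

definition convex_ccw_polygon :: "complex list list \<Rightarrow> nat \<Rightarrow> bool" where
  "convex_ccw_polygon P p \<longleftrightarrow> nverts P p \<ge> 3 \<and>
     (\<forall>i < nverts P p. \<forall>j < nverts P p. j \<noteq> i \<and> j \<noteq> Suc i mod nverts P p \<longrightarrow>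
        cross (edge_vec P p i) (vtx P p j - vtx P p i) > 0)"

definition angles_obtuse_or_right :: "complex list list \<Rightarrow> nat \<Rightarrow> bool" where
  "angles_obtuse_or_right P p \<longleftrightarrow>
     (\<forall>i < nverts P p. dotc (vtx P p (i + nverts P p - 1) - vtx P p i)
                           (vtx P p (Suc i) - vtx P p i) \<le> 0)"

text \<open>A translation surface given by finitely many polygons and a pairing of sides:
the pairing is a fixed-point-free involution on the sides, and paired sides are parallel,
of equal length, and glued by a translation (with counterclockwise orientation the
edge vectors of paired sides are opposite).\<close>
definition translation_surface :: "complex list list \<Rightarrow> (nat \<times> nat \<Rightarrow> nat \<times> nat) \<Rightarrow> bool" where
  "translation_surface P sg \<longleftrightarrow> P \<noteq> [] \<and>
     (\<forall>p < length P. convex_ccw_polygon P p) \<and>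
     (\<forall>s. is_side P s \<longrightarrow> is_side P (sg s) \<and> sg (sg s) = s \<and> sg s \<noteq> s \<and>
         edge_vec P (fst (sg s)) (snd (sg s)) = - edge_vec P (fst s) (snd s))"

definition glue_map :: "complex list list \<Rightarrow> (nat \<times> nat \<Rightarrow> nat \<times> nat) \<Rightarrow> nat \<times> nat \<Rightarrow> complex \<Rightarrow> complex" where
  "glue_map P sg s x = x + (vtx P (fst (sg s)) (snd (sg s)) - vtx P (fst s) (Suc (snd s)))"

definition P1 :: "complex list list \<Rightarrow> bool" where
  "P1 P \<longleftrightarrow> (\<forall>p < length P. convex_ccw_polygon P p \<and> angles_obtuse_or_right P p)"

definition P2 :: "complex list list \<Rightarrow> (nat \<times> nat \<Rightarrow> nat \<times> nat) \<Rightarrow> bool" where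
  "P2 P sg \<longleftrightarrow> (\<forall>s. is_side P s \<longrightarrow> fst (sg s) \<noteq> fst s)"

text \<open>A segment of a polygonal decomposition: (polygon index, start point, end point),
coordinates in the plane of that polygon.\<close>
type_synonym seg = "nat \<times> complex \<times> complex"

definition seg_poly :: "seg \<Rightarrow> nat" where "seg_poly a = fst a"
definition seg_start :: "seg \<Rightarrow> complex" where "seg_start a = fst (snd a)"
definition seg_end :: "seg \<Rightarrow> complex" where "seg_end a = snd (snd a)"

definition is_vertex :: "complex list list \<Rightarrow> nat \<Rightarrow> complex \<Rightarrow> bool" where
  "is_vertex P p x \<longleftrightarrow> x \<in> set (P ! p)"

text \<open>The list segs is the polygonal decomposition of an (oriented) saddle connection:
a straight trajectory of constant direction d, starting and ending at vertices
(singularities), each piece a straight segment in one polygon containing no vertex in its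
interior, and consecutive pieces related by the side gluing at a point of the relative
interior of a side (so no singularity lies in the interior of the trajectory).\<close>
definition saddle_connection ::
  "complex list list \<Rightarrow> (nat \<times> nat \<Rightarrow> nat \<times> nat) \<Rightarrow> seg list \<Rightarrow> bool" where
  "saddle_connection P sg segs \<longleftrightarrow> segs \<noteq> [] \<and>
     (\<exists>d. d \<noteq> 0 \<and> (\<forall>j < length segs.
        seg_poly (segs ! j) < length P \<and>
        (\<exists>l::real. l > 0 \<and> seg_end (segs ! j) - seg_start (segs ! j) = of_real l * d) \<and>
        seg_start (segs ! j) \<in> poly_region P (seg_poly (segs ! j)) \<and>
        seg_end (segs ! j) \<in> poly_region P (seg_poly (segs ! j)) \<and>
        (\<forall>v \<in> set (P ! seg_poly (segs ! j)).
            v \<notin> open_segment (seg_start (segs ! j)) (seg_end (segs ! j))))) \<and>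
     is_vertex P (seg_poly (hd segs)) (seg_start (hd segs)) \<and>
     is_vertex P (seg_poly (last segs)) (seg_end (last segs)) \<and>
     (\<forall>j. Suc j < length segs \<longrightarrow>
        (\<exists>i < nverts P (seg_poly (segs ! j)).
           seg_end (segs ! j) \<in> side_interior P (seg_poly (segs ! j)) i \<and>
           fst (sg (seg_poly (segs ! j), i)) = seg_poly (segs ! Suc j) \<and>
           seg_start (segs ! Suc j) = glue_map P sg (seg_poly (segs ! j), i) (seg_end (segs ! j))))"

definition sc_is_side :: "complex list list \<Rightarrow> seg list \<Rightarrow> bool" where
  "sc_is_side P segs \<longleftrightarrow> length segs = 1 \<and>
     (\<exists>i < nverts P (seg_poly (hd segs)).
        {seg_start (hd segs), seg_end (hd segs)} =
        {vtx P (seg_poly (hd segs)) i, vtx P (seg_poly (hd segs)) (Suc i)})"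

definition sides_adjacent :: "nat \<Rightarrow> nat \<Rightarrow> nat \<Rightarrow> bool" where
  "sides_adjacent n e e' \<longleftrightarrow> e' = Suc e mod n \<or> e = Suc e' mod n"

definition sc_is_diagonal :: "complex list list \<Rightarrow> seg list \<Rightarrow> bool" where
  "sc_is_diagonal P segs \<longleftrightarrow> length segs = 1 \<and>
     (\<exists>i < nverts P (seg_poly (hd segs)). \<exists>j < nverts P (seg_poly (hd segs)).
        seg_start (hd segs) = vtx P (seg_poly (hd segs)) i \<and>
        seg_end (hd segs) = vtx P (seg_poly (hd segs)) j \<and>
        i \<noteq> j \<and> \<not> sides_adjacent (nverts P (seg_poly (hd segs))) i j)"

text \<open>Segment a has type e \<rightarrow> e', where e = (p,i), e' = (p,i') are sides of its polygon p:
it goes from the relative interior of e to the relative interior of e'.\<close>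
definition seg_has_type :: "complex list list \<Rightarrow> seg \<Rightarrow> nat \<times> nat \<Rightarrow> nat \<times> nat \<Rightarrow> bool" where
  "seg_has_type P a e e' \<longleftrightarrow>
     fst e = seg_poly a \<and> fst e' = seg_poly a \<and>
     snd e < nverts P (seg_poly a) \<and> snd e' < nverts P (seg_poly a) \<and>
     seg_start a \<in> side_interior P (seg_poly a) (snd e) \<and>
     seg_end a \<in> side_interior P (seg_poly a) (snd e')"

definition adjacent_seg :: "complex list list \<Rightarrow> seg \<Rightarrow> bool" where
  "adjacent_seg P a \<longleftrightarrow>
     (\<exists>e e'. seg_has_type P a e e' \<and> sides_adjacent (nverts P (seg_poly a)) (snd e) (snd e'))"

definition same_type :: "complex list list \<Rightarrow> seg \<Rightarrow> seg \<Rightarrow> bool" where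
  "same_type P a b \<longleftrightarrow> (\<exists>e e'. seg_has_type P a e e' \<and> seg_has_type P b e e')"

text \<open>0-based indexing: segs ! a, ..., segs ! (a + r - 1) (i.e. alpha_(a+1), ..., alpha_(a+r))
is a maximal run of consecutive adjacent segments.\<close>
definition maximal_adjacent_run :: "complex list list \<Rightarrow> seg list \<Rightarrow> nat \<Rightarrow> nat \<Rightarrow> bool" where
  "maximal_adjacent_run P segs a r \<longleftrightarrow> r \<ge> 1 \<and> a + r \<le> length segs \<and>
     (\<forall>j. a \<le> j \<and> j < a + r \<longrightarrow> adjacent_seg P (segs ! j)) \<and>
     (a = 0 \<or> \<not> adjacent_seg P (segs ! (a - 1))) \<and>
     (a + r = length segs \<or> \<not> adjacent_seg P (segs ! (a + r)))"

definition in_short_cylinder :: "complex list list \<Rightarrow> seg list \<Rightarrow> nat \<Rightarrow> nat \<Rightarrow> bool" where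
  "in_short_cylinder P segs a r \<longleftrightarrow> r \<ge> 2 \<and>
     (\<forall>i. a \<le> i \<and> i + 2 < a + r \<longrightarrow> same_type P (segs ! i) (segs ! (i + 2)))"

end

theory Submission
  imports Defs
begin


lemma cross_ex: "cross a b = Re a * Im b - Im a * Re b" by (simp add: cross_def)
lemma dotc_ex: "dotc a b = Re a * Re b + Im a * Im b" by (simp add: dotc_def)

lemma id1: "cross A d * dotc u u = dotc u d * cross A u + cross u d * dotc A u"
  by (simp add: cross_ex dotc_ex algebra_simps)
lemma id2: "cross d x * cross A B = cross x B * cross d A + cross A x * cross d B"
  by (simp add: cross_ex algebra_simps)

lemma orient:
  assumes "cross A B > 0" "dotc A B \<ge> 0" "cross A d > 0" "cross B d < 0"
  shows "dotc A d > 0 \<and> dotc B d > 0"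
proof
  have AA: "dotc A A > 0" using assms(1)
    by (auto simp: cross_ex dotc_ex) (smt (verit) not_sum_power2_lt_zero power2_eq_square sum_power2_eq_zero_iff mult_eq_0_iff)
  have BB: "dotc B B > 0" using assms(1)
    by (auto simp: cross_ex dotc_ex) (smt (verit) not_sum_power2_lt_zero power2_eq_square sum_power2_eq_zero_iff mult_eq_0_iff)
  have i1: "cross B d * dotc A A = dotc A d * cross B A + cross A d * dotc B A" by (rule id1)
  have "cross B d * dotc A A < 0" using AA assms(4) by (simp add: mult_neg_pos)
  moreover have "cross A d * dotc B A \<ge> 0" using assms(2,3) by (simp add: dotc_ex mult.commute)
  moreover have "dotc A d * cross B A = - (dotc A d * cross A B)" by (simp add: cross_ex algebra_simps)
  ultimately have "dotc A d * cross A B > 0" using i1 by linarith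
  thus "dotc A d > 0" using assms(1) by (simp add: zero_less_mult_iff)
  have i2: "cross A d * dotc B B = dotc B d * cross A B + cross B d * dotc A B" by (rule id1)
  have "cross A d * dotc B B > 0" using BB assms(3) by simp
  moreover have "cross B d * dotc A B \<le> 0" using assms(2,4) by (simp add: mult_nonpos_nonneg mult_le_0_iff)
  ultimately have "dotc B d * cross A B > 0" using i2 by linarith
  thus "dotc B d > 0" using assms(1) by (simp add: zero_less_mult_iff)
qed

lemma cross_lin: "cross a ((1-u) *\<^sub>R b + u *\<^sub>R c - v) = (1-u) * cross a (b - v) + u * cross a (c - v)"
  by (simp add: cross_ex algebra_simps)
lemma cross_diff: "cross a (b - c) = cross a b - cross a c" by (simp add: cross_ex algebra_simps)
lemma cross_self: "cross a a = 0" by (simp add: cross_ex)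
lemma cross_of_real: "cross a (of_real l * d) = l * cross a d" by (simp add: cross_ex algebra_simps)
lemma cross_neg2: "cross a (-d) = - cross a d" by (simp add: cross_ex)
lemma cross_neg1: "cross (-a) d = - cross a d" by (simp add: cross_ex)
lemma dotc_neg2: "dotc a (-d) = - dotc a d" by (simp add: dotc_ex)
lemma dotc_neg1: "dotc (-a) d = - dotc a d" by (simp add: dotc_ex)

lemma vtx_mod: "vtx P p (k mod nverts P p) = vtx P p k" by (simp add: vtx_def)
lemma vtx_Suc_mod: "vtx P p (Suc (k mod nverts P p)) = vtx P p (Suc k)" by (simp add: vtx_def mod_Suc_eq)
lemma edge_vec_mod: "edge_vec P p (k mod nverts P p) = edge_vec P p k"
  by (simp add: edge_vec_def vtx_mod vtx_Suc_mod)

lemma modfacts: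
  assumes "i < n" "(3::nat) \<le> n"
  shows "Suc (Suc i) mod n \<noteq> i \<and> Suc (Suc i) mod n \<noteq> Suc i mod n \<and> Suc i mod n \<noteq> i"
proof -
  consider "Suc (Suc i) < n" | "Suc (Suc i) = n" | "Suc i = n" using assms by linarith
  then show ?thesis
  proof cases
    case 1 then show ?thesis by simp
  next
    case 2 then show ?thesis using assms by auto
  next
    case 3 then show ?thesis using assms by (auto simp: mod_Suc)
  qed
qed



lemma left_all:
  assumes cv: "convex_ccw_polygon P p"
  shows "cross (edge_vec P p i) (vtx P p j - vtx P p i) \<ge> 0 \<and>
     (j mod nverts P p \<noteq> i mod nverts P p \<and> j mod nverts P p \<noteq> Suc i mod nverts P p \<longrightarrow>
      cross (edge_vec P p i) (vtx P p j - vtx P p i) > 0)"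
proof -
  define n where "n = nverts P p"
  have n3: "n \<ge> 3" using cv by (simp add: convex_ccw_polygon_def n_def)
  have strict: "j mod n \<noteq> i mod n \<and> j mod n \<noteq> Suc i mod n \<longrightarrow>
      cross (edge_vec P p i) (vtx P p j - vtx P p i) > 0"
  proof
    assume h: "j mod n \<noteq> i mod n \<and> j mod n \<noteq> Suc i mod n"
    have "Suc (i mod n) mod n = Suc i mod n" by (simp add: mod_Suc_eq)
    with h have "cross (edge_vec P p (i mod n)) (vtx P p (j mod n) - vtx P p (i mod n)) > 0"
      using cv n3 unfolding convex_ccw_polygon_def n_def[symmetric] by auto
    thus "cross (edge_vec P p i) (vtx P p j - vtx P p i) > 0"
      by (simp add: n_def edge_vec_mod vtx_mod)
  qed
  have "cross (edge_vec P p i) (vtx P p j - vtx P p i) \<ge> 0"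
  proof (cases "j mod n = i mod n")
    case True
    then have "vtx P p j = vtx P p i" by (simp add: vtx_def n_def)
    then show ?thesis by (simp add: cross_ex)
  next
    case False
    show ?thesis
    proof (cases "j mod n = Suc i mod n")
      case True
      then have "vtx P p j = vtx P p (Suc i)" by (simp add: vtx_def n_def)
      then show ?thesis by (simp add: edge_vec_def cross_self)
    next
      case False2: False
      then show ?thesis using strict False by simp
    qed
  qed
  with strict show ?thesis by (simp add: n_def)
qed

lemma on_side_zero:
  assumes "x \<in> side_interior P p i"
  shows "cross (edge_vec P p i) (x - vtx P p i) = 0"
proof -
  from assms obtain u where "x = (1 - u) *\<^sub>R vtx P p i + u *\<^sub>R vtx P p (Suc i)"
    unfolding side_interior_def in_segment by auto
  then have "cross (edge_vec P p i) (x - vtx P p i) =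
     (1-u) * cross (edge_vec P p i) (vtx P p i - vtx P p i) + u * cross (edge_vec P p i) (vtx P p (Suc i) - vtx P p i)"
    using cross_lin by simp
  then show ?thesis by (simp add: edge_vec_def cross_self cross_ex)
qed

lemma open_side_pos:
  assumes cv: "convex_ccw_polygon P p" and ij: "i < nverts P p" "j < nverts P p" "i \<noteq> j"
    and x: "x \<in> side_interior P p j"
  shows "cross (edge_vec P p i) (x - vtx P p i) > 0"
proof -
  define n where "n = nverts P p"
  have n3: "n \<ge> 3" using cv by (simp add: convex_ccw_polygon_def n_def)
  from x obtain u where u: "0 < u" "u < 1" "x = (1 - u) *\<^sub>R vtx P p j + u *\<^sub>R vtx P p (Suc j)"
    unfolding side_interior_def in_segment by auto
  define A where "A = cross (edge_vec P p i) (vtx P p j - vtx P p i)"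
  define B where "B = cross (edge_vec P p i) (vtx P p (Suc j) - vtx P p i)"
  have eq: "cross (edge_vec P p i) (x - vtx P p i) = (1-u) * A + u * B"
    using u(3) cross_lin A_def B_def by simp
  have A0: "A \<ge> 0" and B0: "B \<ge> 0" using left_all[OF cv] A_def B_def by auto
  have mf: "Suc (Suc i) mod n \<noteq> i \<and> Suc (Suc i) mod n \<noteq> Suc i mod n \<and> Suc i mod n \<noteq> i"
    using modfacts ij n3 n_def by simp
  show ?thesis
  proof (cases "j = Suc i mod n")
    case True
    then have "Suc j mod n = Suc (Suc i) mod n" by (simp add: mod_Suc_eq)
    then have "B > 0" using left_all[OF cv, of i "Suc j"] mf ij B_def n_def by simp
    then show ?thesis using eq A0 u by (smt (verit) mult_nonneg_nonneg mult_pos_pos)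
  next
    case False
    then have "A > 0" using left_all[OF cv, of i j] ij A_def n_def by simp
    then show ?thesis using eq B0 u by (smt (verit) mult_nonneg_nonneg mult_pos_pos)
  qed
qed

lemma side_int_disjoint:
  assumes cv: "convex_ccw_polygon P p" and ij: "i < nverts P p" "j < nverts P p"
    and x: "x \<in> side_interior P p i" "x \<in> side_interior P p j"
  shows "i = j"
  using open_side_pos[OF cv ij _ x(2)] on_side_zero[OF x(1)] by force

lemma consec:
  assumes cv: "convex_ccw_polygon P p" and ob: "angles_obtuse_or_right P p"
    and k: "k < nverts P p"
  shows "cross (edge_vec P p k) (edge_vec P p (Suc k)) > 0 \<and> dotc (edge_vec P p k) (edge_vec P p (Suc k)) \<ge> 0"
proof
  define n where "n = nverts P p"
  have n3: "n \<ge> 3" using cv by (simp add: convex_ccw_polygon_def n_def)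
  have mf: "Suc (Suc k) mod n \<noteq> k \<and> Suc (Suc k) mod n \<noteq> Suc k mod n \<and> Suc k mod n \<noteq> k"
    using modfacts k n3 n_def by simp
  have "cross (edge_vec P p k) (vtx P p (Suc (Suc k)) - vtx P p k) > 0"
    using left_all[OF cv, of k "Suc (Suc k)"] mf k n_def by simp
  moreover have "edge_vec P p (Suc k) = (vtx P p (Suc (Suc k)) - vtx P p k) - edge_vec P p k"
    by (simp add: edge_vec_def)
  ultimately show "cross (edge_vec P p k) (edge_vec P p (Suc k)) > 0"
    by (simp add: cross_diff cross_self)
  define m where "m = Suc k mod n"
  have m: "m < n" using n3 m_def by simp
  have "dotc (vtx P p (m + n - 1) - vtx P p m) (vtx P p (Suc m) - vtx P p m) \<le> 0"
    using ob m unfolding angles_obtuse_or_right_def n_def by blast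
  moreover have "vtx P p m = vtx P p (Suc k)" using m_def n_def vtx_mod by metis
  moreover have "vtx P p (Suc m) = vtx P p (Suc (Suc k))" using m_def n_def vtx_Suc_mod by metis
  moreover have "vtx P p (m + n - 1) = vtx P p k"
  proof -
    have "(m + n - 1) mod n = k"
    proof (cases "Suc k < n")
      case True
      then have "m = Suc k" using m_def by simp
      then show ?thesis using k n_def by simp
    next
      case False
      then have "Suc k = n" using k n_def by simp
      then have "m = 0" using m_def by simp
      then show ?thesis using \<open>Suc k = n\<close> by simp
    qed
    then show ?thesis using k n_def by (simp add: vtx_def)
  qed
  ultimately have "dotc (- edge_vec P p k) (edge_vec P p (Suc k)) \<le> 0"
    by (simp add: edge_vec_def)
  then show "dotc (edge_vec P p k) (edge_vec P p (Suc k)) \<ge> 0" by (simp add: dotc_neg1)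
qed



lemma seg_signs:
  assumes cv: "convex_ccw_polygon P p" and ob: "angles_obtuse_or_right P p"
    and ty: "seg_has_type P a (p,s) (p,t)" and adj: "sides_adjacent (nverts P p) s t"
    and dir: "seg_end a - seg_start a = of_real l * d" and l: "l > 0"
  shows "cross (edge_vec P p s) d > 0 \<and> cross (edge_vec P p t) d < 0 \<and>
    ((t = Suc s mod nverts P p \<and> dotc (edge_vec P p s) d > 0 \<and> dotc (edge_vec P p t) d > 0) \<or>
     (s = Suc t mod nverts P p \<and> dotc (edge_vec P p s) d < 0 \<and> dotc (edge_vec P p t) d < 0))"
proof -
  define n where "n = nverts P p"
  have n3: "n \<ge> 3" using cv by (simp add: convex_ccw_polygon_def n_def)
  have sn: "s < n" and tn: "t < n" and ps: "p = seg_poly a"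
    and st: "seg_start a \<in> side_interior P p s" and en: "seg_end a \<in> side_interior P p t"
    using ty by (auto simp: seg_has_type_def n_def)
  have ns: "s \<noteq> t" using adj modfacts[OF sn n3] modfacts[OF tn n3]
    by (auto simp: sides_adjacent_def n_def)
  have c1: "cross (edge_vec P p s) d > 0"
  proof -
    have "cross (edge_vec P p s) (seg_end a - vtx P p s) > 0"
      using open_side_pos[OF cv _ _ ns en] sn tn n_def by simp
    moreover have "cross (edge_vec P p s) (seg_start a - vtx P p s) = 0" using on_side_zero[OF st] .
    ultimately have "cross (edge_vec P p s) (seg_end a - seg_start a) > 0"
      by (simp add: cross_diff)
    then have "l * cross (edge_vec P p s) d > 0" using dir by (simp add: cross_of_real)
    then show ?thesis using l by (simp add: zero_less_mult_iff)
  qed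
  have c2: "cross (edge_vec P p t) d < 0"
  proof -
    have "cross (edge_vec P p t) (seg_start a - vtx P p t) > 0"
      using open_side_pos[OF cv _ _ _ st] ns sn tn n_def by simp
    moreover have "cross (edge_vec P p t) (seg_end a - vtx P p t) = 0" using on_side_zero[OF en] .
    ultimately have "cross (edge_vec P p t) (seg_end a - seg_start a) < 0"
      by (simp add: cross_diff)
    then have "l * cross (edge_vec P p t) d < 0" using dir by (simp add: cross_of_real)
    then show ?thesis using l by (simp add: mult_less_0_iff)
  qed
  have "(t = Suc s mod n \<and> dotc (edge_vec P p s) d > 0 \<and> dotc (edge_vec P p t) d > 0) \<or>
     (s = Suc t mod n \<and> dotc (edge_vec P p s) d < 0 \<and> dotc (edge_vec P p t) d < 0)"
  proof (cases "t = Suc s mod n")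
    case True
    then have et: "edge_vec P p t = edge_vec P p (Suc s)" using edge_vec_mod n_def by metis
    from consec[OF cv ob] sn n_def have "cross (edge_vec P p s) (edge_vec P p (Suc s)) > 0"
      "dotc (edge_vec P p s) (edge_vec P p (Suc s)) \<ge> 0" by auto
    from orient[OF this c1] c2 et True show ?thesis by simp
  next
    case False
    then have T: "s = Suc t mod n" using adj by (simp add: sides_adjacent_def n_def)
    then have es: "edge_vec P p s = edge_vec P p (Suc t)" using edge_vec_mod n_def by metis
    from consec[OF cv ob] tn n_def have "cross (edge_vec P p t) (edge_vec P p (Suc t)) > 0"
      "dotc (edge_vec P p t) (edge_vec P p (Suc t)) \<ge> 0" by auto
    from orient[OF this, of "-d"] c1 c2 es T show ?thesis by (simp add: cross_neg2 dotc_neg2)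
  qed
  with c1 c2 show ?thesis by (simp add: n_def)
qed

lemma phi_min:
  assumes cv: "convex_ccw_polygon P p" and ob: "angles_obtuse_or_right P p"
    and k: "k < nverts P p" and c1: "cross (edge_vec P p k) d > 0"
    and c2: "cross (edge_vec P p (Suc k)) d < 0"
    and j: "j mod nverts P p \<noteq> Suc k mod nverts P p"
  shows "cross d (vtx P p j) > cross d (vtx P p (Suc k))"
proof -
  define n where "n = nverts P p"
  have n3: "n \<ge> 3" using cv by (simp add: convex_ccw_polygon_def n_def)
  have mf: "Suc (Suc k) mod n \<noteq> k \<and> Suc (Suc k) mod n \<noteq> Suc k mod n \<and> Suc k mod n \<noteq> k"
    using modfacts k n3 n_def by simp
  define A where "A = edge_vec P p k"
  define B where "B = edge_vec P p (Suc k)"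
  define x where "x = vtx P p j - vtx P p (Suc k)"
  have AB: "cross A B > 0" using consec[OF cv ob k] A_def B_def by simp
  have Ax: "cross A x = cross (edge_vec P p k) (vtx P p j - vtx P p k)"
    unfolding A_def x_def by (simp add: edge_vec_def cross_ex algebra_simps)
  have Bx: "cross B x = cross (edge_vec P p (Suc k)) (vtx P p j - vtx P p (Suc k))"
    unfolding B_def x_def by simp
  have Ax0: "cross A x \<ge> 0" using Ax left_all[OF cv] by simp
  have Bx0: "cross B x \<ge> 0" using Bx left_all[OF cv] by simp
  have strict: "cross A x > 0 \<or> cross B x > 0"
  proof (cases "j mod n = k")
    case True
    then have "cross B x > 0" using Bx left_all[OF cv, of "Suc k" j] mf j n_def
      by (simp add: mod_Suc_eq)
    then show ?thesis by simp
  next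
    case False
    then have "cross A x > 0" using Ax left_all[OF cv, of k j] k j n_def by simp
    then show ?thesis by simp
  qed
  have idd: "cross d x * cross A B = cross x B * cross d A + cross A x * cross d B" by (rule id2)
  have t1: "cross x B * cross d A = cross B x * cross A d" by (simp add: cross_ex algebra_simps)
  have dA: "cross A d > 0" using c1 A_def by simp
  have dB: "cross d B > 0" using c2 B_def by (simp add: cross_ex mult.commute)
  have "cross B x * cross A d + cross A x * cross d B > 0"
    using strict Ax0 Bx0 dA dB
    by (smt (verit) mult_nonneg_nonneg mult_pos_pos)
  then have "cross d x * cross A B > 0" using idd t1 by simp
  then have "cross d x > 0" using AB by (simp add: zero_less_mult_iff)
  then show ?thesis unfolding x_def by (simp add: cross_diff)
qed

lemma uniq_transition:
  assumes cv: "convex_ccw_polygon P p" and ob: "angles_obtuse_or_right P p"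
    and k: "k < nverts P p" and c1: "cross (edge_vec P p k) d > 0"
    and c2: "cross (edge_vec P p (Suc k)) d < 0"
    and g: "g < nverts P p" and c3: "cross (edge_vec P p g) d > 0"
    and c4: "cross (edge_vec P p (Suc g)) d < 0"
  shows "k = g"
proof (rule ccontr)
  assume ne: "k \<noteq> g"
  have "Suc k mod nverts P p \<noteq> Suc g mod nverts P p"
    using ne k g by (auto simp: mod_Suc split: if_splits)
  then have "cross d (vtx P p (Suc k)) > cross d (vtx P p (Suc g))"
    "cross d (vtx P p (Suc g)) > cross d (vtx P p (Suc k))"
    using phi_min[OF cv ob k c1 c2, of "Suc g"] phi_min[OF cv ob g c3 c4, of "Suc k"] by auto
  then show False by simp
qed



lemma glue_in:
  assumes ts: "translation_surface P sg" and sd: "is_side P (p,i)"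
    and x: "x \<in> side_interior P p i"
  shows "glue_map P sg (p,i) x \<in> side_interior P (fst (sg (p,i))) (snd (sg (p,i)))"
proof -
  obtain q m where qm: "sg (p,i) = (q,m)" by fastforce
  have E: "edge_vec P q m = - edge_vec P p i" using ts sd qm unfolding translation_surface_def by force
  from x obtain u where u: "0 < u" "u < 1" "x = (1 - u) *\<^sub>R vtx P p i + u *\<^sub>R vtx P p (Suc i)"
    and ne: "vtx P p i \<noteq> vtx P p (Suc i)"
    unfolding side_interior_def in_segment by auto
  have ne2: "vtx P q m \<noteq> vtx P q (Suc m)" using E ne by (auto simp: edge_vec_def)
  have WS: "vtx P q (Suc m) = vtx P q m - (vtx P p (Suc i) - vtx P p i)"
    using E by (simp add: edge_vec_def algebra_simps)
  have "glue_map P sg (p,i) x = (1 - (1-u)) *\<^sub>R vtx P q m + (1-u) *\<^sub>R vtx P q (Suc m)"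
    unfolding glue_map_def qm u(3) WS by (simp add: scaleR_conv_of_real algebra_simps)
  then have "glue_map P sg (p,i) x \<in> open_segment (vtx P q m) (vtx P q (Suc m))"
    unfolding in_segment using ne2 u by (intro conjI exI[of _ "1-u"]) auto
  then show ?thesis by (simp add: qm side_interior_def)
qed

lemma sc_poly:
  assumes "saddle_connection P sg segs" "j < length segs"
  shows "seg_poly (segs ! j) < length P"
  using assms unfolding saddle_connection_def by blast

lemma link2:
  assumes ts: "translation_surface P sg" and p1: "P1 P" and sc: "saddle_connection P sg segs"
    and j: "Suc j < length segs"
    and ty: "seg_has_type P (segs!j) (p,s) (p,t)"
  shows "fst (sg (p,t)) = seg_poly (segs ! Suc j) \<and> is_side P (p,t) \<and>
    seg_start (segs ! Suc j) \<in> side_interior P (seg_poly (segs ! Suc j)) (snd (sg (p,t)))"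
proof -
  have ps: "p = seg_poly (segs!j)" and tn: "t < nverts P p" and en: "seg_end (segs!j) \<in> side_interior P p t"
    using ty by (auto simp: seg_has_type_def)
  have pl: "p < length P" using sc_poly[OF sc] j ps by simp
  have cv: "convex_ccw_polygon P p" using p1 pl by (simp add: P1_def)
  from sc j obtain k where k: "k < nverts P p" "seg_end (segs ! j) \<in> side_interior P p k"
    "fst (sg (p, k)) = seg_poly (segs ! Suc j)"
    "seg_start (segs ! Suc j) = glue_map P sg (p, k) (seg_end (segs ! j))"
    unfolding saddle_connection_def ps by blast
  have kt: "k = t" using side_int_disjoint[OF cv k(1) tn k(2) en] .
  have sd: "is_side P (p,t)" using pl tn by (simp add: is_side_def)
  show ?thesis using k kt sd glue_in[OF ts sd en] by simp
qed

lemma link: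
  assumes ts: "translation_surface P sg" and p1: "P1 P" and sc: "saddle_connection P sg segs"
    and j: "Suc j < length segs"
    and ty: "seg_has_type P (segs!j) (p,s) (p,t)"
    and ty2: "seg_has_type P (segs!Suc j) (q,s') (q,t')"
  shows "sg (p,t) = (q,s')"
proof -
  note L = link2[OF ts p1 sc j ty]
  have qs: "q = seg_poly (segs ! Suc j)" and sn: "s' < nverts P q"
    and st: "seg_start (segs ! Suc j) \<in> side_interior P q s'"
    using ty2 by (auto simp: seg_has_type_def)
  have ql: "q < length P" using sc_poly[OF sc] j qs by simp
  have cv: "convex_ccw_polygon P q" using p1 ql by (simp add: P1_def)
  have "is_side P (sg (p,t))" using ts L unfolding translation_surface_def by blast
  then have "snd (sg (p,t)) < nverts P q" using L qs by (simp add: is_side_def)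
  then have "snd (sg (p,t)) = s'" using side_int_disjoint[OF cv _ sn _ st] L qs by simp
  then show ?thesis using L qs by (metis prod.collapse)
qed



lemma same_poly:
  assumes ts: "translation_surface P sg" and p1: "P1 P" and sc: "saddle_connection P sg segs"
    and j: "Suc (Suc j) < length segs"
    and ty1: "seg_has_type P (segs!j) (p,s1) (p,t1)" and a1: "sides_adjacent (nverts P p) s1 t1"
    and ty2: "seg_has_type P (segs!Suc j) (q,s2) (q,t2)" and a2: "sides_adjacent (nverts P q) s2 t2"
    and ty3: "seg_has_type P (segs!Suc (Suc j)) (p,s3) (p,t3)" and a3: "sides_adjacent (nverts P p) s3 t3"
  shows "s1 = s3 \<and> t1 = t3"
proof -
  from sc obtain d where dd: "\<forall>j < length segs. (\<exists>l::real. l > 0 \<and> seg_end (segs ! j) - seg_start (segs ! j) = of_real l * d)"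
    unfolding saddle_connection_def by blast
  have pp: "p = seg_poly (segs!j)" "q = seg_poly (segs!Suc j)" using ty1 ty2 by (auto simp: seg_has_type_def)
  have pl: "p < length P" "q < length P" using sc_poly[OF sc] j pp by auto
  have cvp: "convex_ccw_polygon P p" "angles_obtuse_or_right P p"
    and cvq: "convex_ccw_polygon P q" "angles_obtuse_or_right P q" using p1 pl by (auto simp: P1_def)
  have jj: "j < length segs" "Suc j < length segs" using j by auto
  obtain l1 where l1: "l1 > 0" "seg_end (segs ! j) - seg_start (segs ! j) = of_real l1 * d" using dd jj(1) by blast
  obtain l2 where l2: "l2 > 0" "seg_end (segs ! Suc j) - seg_start (segs ! Suc j) = of_real l2 * d" using dd jj(2) by blast
  obtain l3 where l3: "l3 > 0" "seg_end (segs ! Suc (Suc j)) - seg_start (segs ! Suc (Suc j)) = of_real l3 * d" using dd j by blast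
  note S1 = seg_signs[OF cvp ty1 a1 l1(2) l1(1)]
  note S2 = seg_signs[OF cvq ty2 a2 l2(2) l2(1)]
  note S3 = seg_signs[OF cvp ty3 a3 l3(2) l3(1)]
  have L1: "sg (p,t1) = (q,s2)" using link[OF ts p1 sc _ ty1 ty2] j by simp
  have L2: "sg (q,t2) = (p,s3)" using link[OF ts p1 sc _ ty2 ty3] j by simp
  have sd1: "is_side P (p,t1)" and sd2: "is_side P (q,t2)"
    using ty1 ty2 pl by (auto simp: is_side_def seg_has_type_def)
  have E1: "edge_vec P q s2 = - edge_vec P p t1" using ts sd1 L1 unfolding translation_surface_def by force
  have E2: "edge_vec P p s3 = - edge_vec P q t2" using ts sd2 L2 unfolding translation_surface_def by force
  have s1n: "s1 < nverts P p" "s3 < nverts P p" "t1 < nverts P p" "t3 < nverts P p"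
    using ty1 ty3 by (auto simp: seg_has_type_def)
  show ?thesis
  proof (cases "dotc (edge_vec P p s1) d > 0")
    case True
    then have A: "t1 = Suc s1 mod nverts P p" "dotc (edge_vec P p t1) d > 0" using S1 by auto
    then have "dotc (edge_vec P q s2) d < 0" using E1 by (simp add: dotc_neg1)
    then have "dotc (edge_vec P q t2) d < 0" using S2 by auto
    then have "dotc (edge_vec P p s3) d > 0" using E2 by (simp add: dotc_neg1)
    then have B: "t3 = Suc s3 mod nverts P p" using S3 by auto
    have "s1 = s3"
      using uniq_transition[OF cvp s1n(1) _ _ s1n(2)] S1 S3 A B by (metis edge_vec_mod)
    then show ?thesis using A B by simp
  next
    case False
    then have A: "s1 = Suc t1 mod nverts P p" "dotc (edge_vec P p t1) d < 0" using S1 by auto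
    then have "dotc (edge_vec P q s2) d > 0" using E1 by (simp add: dotc_neg1)
    then have "dotc (edge_vec P q t2) d > 0" using S2 by auto
    then have "dotc (edge_vec P p s3) d < 0" using E2 by (simp add: dotc_neg1)
    then have B: "s3 = Suc t3 mod nverts P p" using S3 by auto
    have c1: "cross (edge_vec P p t1) (-d) > 0" "cross (edge_vec P p (Suc t1)) (-d) < 0"
      using S1 A edge_vec_mod[of P p "Suc t1"] by (auto simp: cross_neg2)
    have c3: "cross (edge_vec P p t3) (-d) > 0" "cross (edge_vec P p (Suc t3)) (-d) < 0"
      using S3 B edge_vec_mod[of P p "Suc t3"] by (auto simp: cross_neg2)
    have "t1 = t3" using uniq_transition[OF cvp s1n(3) c1 s1n(4) c3] .
    then show ?thesis using A B by simp
  qed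
qed



lemma get_type:
  assumes "maximal_adjacent_run P segs a r" "a \<le> j" "j < a + r"
  shows "\<exists>s t. seg_has_type P (segs!j) (seg_poly (segs!j), s) (seg_poly (segs!j), t) \<and>
     sides_adjacent (nverts P (seg_poly (segs!j))) s t"
proof -
  have "adjacent_seg P (segs ! j)" using assms unfolding maximal_adjacent_run_def by blast
  then obtain e e' where "seg_has_type P (segs!j) e e'" "sides_adjacent (nverts P (seg_poly (segs!j))) (snd e) (snd e')"
    unfolding adjacent_seg_def by blast
  moreover have "e = (seg_poly (segs!j), snd e)" "e' = (seg_poly (segs!j), snd e')"
    using calculation(1) unfolding seg_has_type_def by (metis prod.collapse)+
  ultimately show ?thesis by metis
qed

lemma consec_diff:
  assumes p2: "P2 P sg" and sc: "saddle_connection P sg segs" and j: "Suc j < length segs"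
  shows "seg_poly (segs!j) \<noteq> seg_poly (segs!Suc j)"
proof -
  from sc j obtain k where k: "k < nverts P (seg_poly (segs ! j))"
    "fst (sg (seg_poly (segs ! j), k)) = seg_poly (segs ! Suc j)"
    unfolding saddle_connection_def by blast
  have "seg_poly (segs ! j) < length P" using sc_poly[OF sc] j by simp
  then have "is_side P (seg_poly (segs ! j), k)" using k by (simp add: is_side_def)
  then show ?thesis using p2 k unfolding P2_def by fastforce
qed

lemma sp_types:
  assumes ts: "translation_surface P sg" and p1: "P1 P" and sc: "saddle_connection P sg segs"
    and run: "maximal_adjacent_run P segs a r" and w: "a \<le> j" "Suc (Suc j) < a + r"
    and sp: "seg_poly (segs!j) = seg_poly (segs!Suc (Suc j))"
  shows "\<exists>s t. seg_has_type P (segs!j) (seg_poly (segs!j), s) (seg_poly (segs!j), t) \<and>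
     seg_has_type P (segs!Suc (Suc j)) (seg_poly (segs!j), s) (seg_poly (segs!j), t)"
proof -
  have len: "Suc (Suc j) < length segs" using run w unfolding maximal_adjacent_run_def by simp
  obtain s1 t1 where A: "seg_has_type P (segs!j) (seg_poly (segs!j), s1) (seg_poly (segs!j), t1)"
    "sides_adjacent (nverts P (seg_poly (segs!j))) s1 t1" using get_type[OF run, of j] w by auto
  obtain s2 t2 where B: "seg_has_type P (segs!Suc j) (seg_poly (segs!Suc j), s2) (seg_poly (segs!Suc j), t2)"
    "sides_adjacent (nverts P (seg_poly (segs!Suc j))) s2 t2" using get_type[OF run, of "Suc j"] w by auto
  obtain s3 t3 where C: "seg_has_type P (segs!Suc (Suc j)) (seg_poly (segs!j), s3) (seg_poly (segs!j), t3)"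
    "sides_adjacent (nverts P (seg_poly (segs!j))) s3 t3" using get_type[OF run, of "Suc (Suc j)"] w sp by auto
  have "s1 = s3 \<and> t1 = t3" using same_poly[OF ts p1 sc len A B C] .
  then show ?thesis using A C by blast
qed

lemma sp_forward:
  assumes ts: "translation_surface P sg" and p1: "P1 P" and sc: "saddle_connection P sg segs"
    and run: "maximal_adjacent_run P segs a r" and w: "a \<le> j" "Suc (Suc (Suc j)) < a + r"
    and sp: "seg_poly (segs!j) = seg_poly (segs!Suc (Suc j))"
  shows "seg_poly (segs!Suc j) = seg_poly (segs!Suc (Suc (Suc j)))"
proof -
  have len: "Suc (Suc (Suc j)) < length segs" using run w unfolding maximal_adjacent_run_def by simp
  obtain s t where T: "seg_has_type P (segs!j) (seg_poly (segs!j), s) (seg_poly (segs!j), t)"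
     "seg_has_type P (segs!Suc (Suc j)) (seg_poly (segs!j), s) (seg_poly (segs!j), t)"
    using sp_types[OF ts p1 sc run w(1) _ sp] w by auto
  show ?thesis using link2[OF ts p1 sc _ T(1)] link2[OF ts p1 sc _ T(2)] len by simp
qed

lemma sp_backward:
  assumes ts: "translation_surface P sg" and p1: "P1 P" and sc: "saddle_connection P sg segs"
    and run: "maximal_adjacent_run P segs a r" and w: "a \<le> j" "Suc (Suc (Suc j)) < a + r"
    and sp: "seg_poly (segs!Suc j) = seg_poly (segs!Suc (Suc (Suc j)))"
  shows "seg_poly (segs!j) = seg_poly (segs!Suc (Suc j))"
proof -
  have len: "Suc (Suc (Suc j)) < length segs" using run w unfolding maximal_adjacent_run_def by simp
  obtain s t where T: "seg_has_type P (segs!Suc j) (seg_poly (segs!Suc j), s) (seg_poly (segs!Suc j), t)"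
     "seg_has_type P (segs!Suc (Suc (Suc j))) (seg_poly (segs!Suc j), s) (seg_poly (segs!Suc j), t)"
    using sp_types[OF ts p1 sc run _ _ sp] w by auto
  obtain s0 t0 where A: "seg_has_type P (segs!j) (seg_poly (segs!j), s0) (seg_poly (segs!j), t0)"
    using get_type[OF run, of j] w by auto
  obtain s2 t2 where B: "seg_has_type P (segs!Suc (Suc j)) (seg_poly (segs!Suc (Suc j)), s2) (seg_poly (segs!Suc (Suc j)), t2)"
    using get_type[OF run, of "Suc (Suc j)"] w by auto
  have L1: "sg (seg_poly (segs!j), t0) = (seg_poly (segs!Suc j), s)" using link[OF ts p1 sc _ A T(1)] len by simp
  have L2: "sg (seg_poly (segs!Suc (Suc j)), t2) = (seg_poly (segs!Suc j), s)"
    using link[OF ts p1 sc _ B T(2)] len by simp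
  have sd: "is_side P (seg_poly (segs!j), t0)" "is_side P (seg_poly (segs!Suc (Suc j)), t2)"
    using A B sc_poly[OF sc] len by (auto simp: is_side_def seg_has_type_def)
  have "(seg_poly (segs!j), t0) = sg (seg_poly (segs!Suc j), s)"
    using ts sd(1) L1 unfolding translation_surface_def by metis
  moreover have "(seg_poly (segs!Suc (Suc j)), t2) = sg (seg_poly (segs!Suc j), s)"
    using ts sd(2) L2 unfolding translation_surface_def by metis
  ultimately show ?thesis by (metis fst_conv)
qed

theorem mainTheorem10:
  fixes P :: "complex list list" and sg :: "nat \<times> nat \<Rightarrow> nat \<times> nat"
    and segs :: "seg list" and a r :: nat
  assumes "translation_surface P sg"
    and "P1 P" and "P2 P sg"
    and "saddle_connection P sg segs"
    and "\<not> sc_is_side P segs" and "\<not> sc_is_diagonal P segs"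
    and "maximal_adjacent_run P segs a r"
    and "\<not> in_short_cylinder P segs a r"
  shows "\<forall>i. a \<le> i \<and> i + 2 < a + r \<longrightarrow>
           seg_poly (segs ! i) \<noteq> seg_poly (segs ! (i + 1)) \<and>
           seg_poly (segs ! (i + 1)) \<noteq> seg_poly (segs ! (i + 2)) \<and>
           seg_poly (segs ! i) \<noteq> seg_poly (segs ! (i + 2))"
proof (intro allI impI)
  fix i assume iw: "a \<le> i \<and> i + 2 < a + r"
  note ts = assms(1) and p1 = assms(2) and p2 = assms(3) and sc = assms(4) and run = assms(7)
  have len: "a + r \<le> length segs" using run unfolding maximal_adjacent_run_def by simp
  have d1: "seg_poly (segs ! i) \<noteq> seg_poly (segs ! (i + 1))"
    using consec_diff[OF p2 sc, of i] iw len by simp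
  have d2: "seg_poly (segs ! (i + 1)) \<noteq> seg_poly (segs ! (i + 2))"
    using consec_diff[OF p2 sc, of "Suc i"] iw len by (simp add: numeral_2_eq_2)
  have d3: "seg_poly (segs ! i) \<noteq> seg_poly (segs ! (i + 2))"
  proof
    assume sp: "seg_poly (segs ! i) = seg_poly (segs ! (i + 2))"
    let ?SP = "\<lambda>j. seg_poly (segs ! j) = seg_poly (segs ! Suc (Suc j))"
    have fw: "\<forall>m. Suc (Suc (i + m)) < a + r \<longrightarrow> ?SP (i + m)"
    proof
      fix m show "Suc (Suc (i + m)) < a + r \<longrightarrow> ?SP (i + m)"
      proof (induction m)
        case 0 then show ?case using sp by (simp add: numeral_2_eq_2)
      next
        case (Suc m)
        show ?case
        proof
          assume h: "Suc (Suc (i + Suc m)) < a + r"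
          then have "?SP (i + m)" using Suc by simp
          then show "?SP (i + Suc m)" using sp_forward[OF ts p1 sc run, of "i + m"] iw h by simp
        qed
      qed
    qed
    have bw: "\<forall>m. m \<le> i - a \<longrightarrow> ?SP (i - m)"
    proof
      fix m show "m \<le> i - a \<longrightarrow> ?SP (i - m)"
      proof (induction m)
        case 0 then show ?case using sp by (simp add: numeral_2_eq_2)
      next
        case (Suc m)
        show ?case
        proof
          assume h: "Suc m \<le> i - a"
          then have "?SP (i - m)" using Suc by simp
          moreover have e: "Suc (i - Suc m) = i - m" using h by simp
          ultimately have "?SP (Suc (i - Suc m))" by simp
          moreover have "a \<le> i - Suc m" "Suc (Suc (Suc (i - Suc m))) < a + r" using h iw by auto
          ultimately show "?SP (i - Suc m)" using sp_backward[OF ts p1 sc run] by blast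
        qed
      qed
    qed
    have all: "?SP j" if "a \<le> j" "Suc (Suc j) < a + r" for j
    proof (cases "i \<le> j")
      case True then show ?thesis using fw[rule_format, of "j - i"] that by simp
    next
      case False then show ?thesis using bw[rule_format, of "i - j"] that iw by simp
    qed
    have "in_short_cylinder P segs a r"
      unfolding in_short_cylinder_def
    proof (intro conjI allI impI)
      show "2 \<le> r" using iw by simp
      fix j assume "a \<le> j \<and> j + 2 < a + r"
      then have jw: "a \<le> j" "Suc (Suc j) < a + r" by auto
      obtain s t where "seg_has_type P (segs!j) (seg_poly (segs!j), s) (seg_poly (segs!j), t)"
        "seg_has_type P (segs!Suc (Suc j)) (seg_poly (segs!j), s) (seg_poly (segs!j), t)"
        using sp_types[OF ts p1 sc run jw all[OF jw]] by blast
      then show "same_type P (segs ! j) (segs ! (j + 2))"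
        unfolding same_type_def by (auto simp: numeral_2_eq_2)
    qed
    then show False using assms(8) by simp
  qed
  show "seg_poly (segs ! i) \<noteq> seg_poly (segs ! (i + 1)) \<and>
           seg_poly (segs ! (i + 1)) \<noteq> seg_poly (segs ! (i + 2)) \<and>
           seg_poly (segs ! i) \<noteq> seg_poly (segs ! (i + 2))" using d1 d2 d3 by simp
qed


end
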